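(* The map $\int:\mathbb L\to\mathcal L$, $\int(u+\varepsilon\tilde u)=\int u\,dx$, is a morphism of sheaves of dg Lie algebras (with $\mathcal L$ carrying zero differential) and a weak equivalence. Concretely, for every connected coordinate open set $U$, $\int$ induces an isomorphism of graded Lie algebras $H(\mathbb L(U),D)\cong\mathcal L(U)$; equivalently, an element $u\in\Lambda_\infty(U)$ satisfies $\partial_x u=0$ if and only if $u$ is a constant multiple of $1$.
   Context: Let $X$ be a complex manifold of dimension $n$; on a coordinate open set $U$ with coordinates $t^1,\dots,t^n$, $\Lambda_\infty(U)$ is the graded-commutative algebra over $\mathcal O(U)$ generated by even variables $t^a_k$ ($k\ge1$) and odd variables $\theta_{k,a}$ ($k\ge0$); set $t^a_0=t^a$. Grading: a monomial with $p+1$ factors $\theta_{k,a}$ has degree $p$ (constants have degree $-1$). Write $\partial_{k,a}=\partial/\partial t^a_k$, $\partial^a_k=\partial/\partial\theta_{k,a}$ (left odd derivative), and total derivative $\partial_x=\sum_{k\ge0}(t^a_{k+1}\partial_{k,a}+\theta_{k+1,a}\partial^a_k)$. The bracket is $[u,v]_\infty=\sum_{k,\ell\ge0}\big((-1)^{|u|}\partial_x^\ell(\partial^a_ku)\,\partial_x^k(\partial_{\ell,a}v)-\partial_x^\ell(\partial_{k,a}u)\,\partial_x^k(\partial^a_\ell v)\big)$, making $\Lambda_\infty$ a sheaf of graded Lie algebras (these constructions are invariant under holomorphic coordinate changes). $\mathcal L=\Lambda_\infty/\partial_x\Lambda_\infty$ with projection $u\mapsto\int u\,dx$ and bracket $\llbracket\int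 u\,dx,\int v\,dx\rrbracket=\int[u,v]_\infty dx$. $\tilde\Lambda_\infty=\Lambda_\infty/\mathbb C\cdot1$. $\mathbb L=\Lambda_\infty\oplus\varepsilon\tilde\Lambda_\infty$, where $\varepsilon\tilde u$ has degree $\deg\tilde u-1$, with differential $D(u+\varepsilon\tilde u)=\partial_x\tilde u$ and bracket $[u+\varepsilon\tilde u,v+\varepsilon\tilde v]_\infty=[u,v]_\infty+\varepsilon([\tilde u,v]_\infty+(-1)^{|u|}[u,\tilde v]_\infty)$. A weak equivalence of sheaves of dg Lie algebras is a morphism inducing isomorphisms on cohomology sheaves. *)

theory Defs
  imports "HOL-Analysis.Analysis" "HOL-Library.Multiset"
begin

text \<open>Local model of Lambda_infinity(U) on a coordinate open set U of (complex, 'n) vec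
  (coordinates t^a, a :: 'n).  Variables are indexed by pairs (k,a) :: nat \<times> 'n:
  the even variable t^a_k (k \<ge> 1) and the odd variable theta_{k,a} (k \<ge> 0).
  A monomial is (E,S): a multiset E of even variables and a finite set S of odd
  variables; the odd variables are written in increasing order w.r.t. lessV,
  after the (central) even ones.\<close>

type_synonym 'n var = "nat \<times> 'n"
type_synonym 'n mono = "'n var multiset \<times> 'n var set"
type_synonym 'n elt = "'n mono \<Rightarrow> (complex, 'n) vec \<Rightarrow> complex"

definition holo :: "((complex, ('n::finite)) vec) set \<Rightarrow> ((complex, 'n) vec \<Rightarrow> complex) \<Rightarrow> bool" where
  "holo U f \<longleftrightarrow> (\<forall>x\<in>U. \<exists>L. linear L \<and> (\<forall>c v. L (c *s v) = c * L v)
                      \<and> (f has_derivative L) (at x))"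

definition supp :: "('n::finite) elt \<Rightarrow> 'n mono set" where
  "supp u = {m. u m \<noteq> (\<lambda>_. 0)}"

definition Lam :: "((complex, ('n::finite)) vec) set \<Rightarrow> 'n elt \<Rightarrow> bool" where
  "Lam U u \<longleftrightarrow> finite (supp u)
     \<and> (\<forall>m\<in>supp u. (\<forall>v \<in># fst m. fst v \<ge> 1) \<and> finite (snd m))
     \<and> (\<forall>m. holo U (u m) \<and> (\<forall>x. x \<notin> U \<longrightarrow> u m x = 0))"

definition ezero :: "('n::finite) elt" where "ezero = (\<lambda>m x. 0)"

definition econst :: "((complex, ('n::finite)) vec) set \<Rightarrow> complex \<Rightarrow> 'n elt" where
  "econst U c = (\<lambda>m x. if m = ({#}, {}) \<and> x \<in> U then c else 0)"

definition eadd :: "('n::finite) elt \<Rightarrow> 'n elt \<Rightarrow> 'n elt" where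
  "eadd u v = (\<lambda>m x. u m x + v m x)"

definition esub :: "('n::finite) elt \<Rightarrow> 'n elt \<Rightarrow> 'n elt" where
  "esub u v = (\<lambda>m x. u m x - v m x)"

definition lessV :: "('n::linorder) var \<Rightarrow> 'n var \<Rightarrow> bool" where
  "lessV i j \<longleftrightarrow> fst i < fst j \<or> (fst i = fst j \<and> snd i < snd j)"

text \<open>sign of moving theta_j to the front of the ordered product over S\<close>
definition osign :: "('n::linorder) var set \<Rightarrow> 'n var \<Rightarrow> complex" where
  "osign S j = (-1) ^ card {i\<in>S. lessV i j}"

text \<open>sign for reordering theta_{S1} theta_{S2} into increasing order\<close>
definition msign :: "('n::linorder) var set \<Rightarrow> 'n var set \<Rightarrow> complex" where
  "msign S1 S2 = (-1) ^ card {(i,j). i \<in> S1 \<and> j \<in> S2 \<and> lessV j i}"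

definition pd :: "((complex, ('n::finite)) vec) set \<Rightarrow> 'n \<Rightarrow> ((complex, 'n) vec \<Rightarrow> complex) \<Rightarrow> (complex, 'n) vec \<Rightarrow> complex" where
  "pd U a f = (\<lambda>x. if x \<in> U then deriv (\<lambda>z. f (\<chi> b. if b = a then z else x $ b)) (x $ a) else 0)"

text \<open>\<partial>_{k,a} = \<partial>/\<partial>t^a_k  (t^a_0 = t^a)\<close>
definition dEven :: "((complex, ('n::finite)) vec) set \<Rightarrow> nat \<Rightarrow> 'n \<Rightarrow> 'n elt \<Rightarrow> 'n elt" where
  "dEven U k a u = (\<lambda>(E,S). if k = 0 then pd U a (u (E,S))
      else (\<lambda>x. of_nat (count E (k,a) + 1) * u (add_mset (k,a) E, S) x))"

text \<open>\<partial>^a_k = \<partial>/\<partial>theta_{k,a} (left derivative)\<close>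
definition dOdd :: "nat \<Rightarrow> ('n::{finite,linorder}) \<Rightarrow> 'n elt \<Rightarrow> 'n elt" where
  "dOdd k a u = (\<lambda>(E,S). if (k,a) \<in> S then (\<lambda>_. 0)
      else (\<lambda>x. osign S (k,a) * u (E, insert (k,a) S) x))"

text \<open>total derivative \<partial>_x = \<Sum>_k (t^a_{k+1} \<partial>_{k,a} + theta_{k+1,a} \<partial>^a_k)\<close>
definition dx :: "((complex, ('n::{finite,linorder})) vec) set \<Rightarrow> 'n elt \<Rightarrow> 'n elt" where
  "dx U u = (\<lambda>(E,S) x.
      (\<Sum>v\<in>{v. (Suc (fst v), snd v) \<in># E}.
          dEven U (fst v) (snd v) u (E - {#(Suc (fst v), snd v)#}, S) x)
    + (\<Sum>v\<in>{v. (Suc (fst v), snd v) \<in> S}.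
          osign S (Suc (fst v), snd v) * dOdd (fst v) (snd v) u (E, S - {(Suc (fst v), snd v)}) x))"

definition mul :: "('n::{finite,linorder}) elt \<Rightarrow> 'n elt \<Rightarrow> 'n elt" where
  "mul u v = (\<lambda>(E,S) x.
     \<Sum>p\<in>{p \<in> supp u \<times> supp v. fst (fst p) + fst (snd p) = E
             \<and> snd (fst p) \<inter> snd (snd p) = {} \<and> snd (fst p) \<union> snd (snd p) = S}.
        msign (snd (fst p)) (snd (snd p)) * u (fst p) x * v (snd p) x)"

text \<open>u \<mapsto> (-1)^{|u|} u on homogeneous components (degree = card S - 1)\<close>
definition sigma :: "('n::finite) elt \<Rightarrow> 'n elt" where
  "sigma u = (\<lambda>m x. (-1) ^ (card (snd m) + 1) * u m x)"

definition bterm :: "((complex, ('n::{finite,linorder})) vec) set \<Rightarrow> 'n elt \<Rightarrow> 'n elt \<Rightarrow> nat \<times> nat \<times> 'n \<Rightarrow> 'n elt" where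
  "bterm U u v p = (case p of (k, l, a) \<Rightarrow>
     esub (mul ((dx U ^^ l) (dOdd k a (sigma u))) ((dx U ^^ k) (dEven U l a v)))
          (mul ((dx U ^^ l) (dEven U k a u)) ((dx U ^^ k) (dOdd l a v))))"

text \<open>the bracket [u,v]_\<infinity> (the sum has finitely many nonzero terms)\<close>
definition bracket :: "((complex, ('n::{finite,linorder})) vec) set \<Rightarrow> 'n elt \<Rightarrow> 'n elt \<Rightarrow> 'n elt" where
  "bracket U u v = (\<lambda>m x. \<Sum>p\<in>{p. bterm U u v p \<noteq> ezero}. bterm U u v p m x)"

text \<open>\<bbbL>(U) = \<Lambda>(U) \<oplus> \<epsilon> (\<Lambda>(U)/\<complex>\<cdot>1): pairs (u, \<tilde>u) with \<tilde>u taken modulo constants\<close>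
definition LL :: "((complex, ('n::finite)) vec) set \<Rightarrow> 'n elt \<times> 'n elt \<Rightarrow> bool" where
  "LL U w \<longleftrightarrow> Lam U (fst w) \<and> Lam U (snd w)"

definition Leq :: "((complex, ('n::finite)) vec) set \<Rightarrow> 'n elt \<times> 'n elt \<Rightarrow> 'n elt \<times> 'n elt \<Rightarrow> bool" where
  "Leq U w w' \<longleftrightarrow> fst w = fst w' \<and> (\<exists>c. snd w = eadd (snd w') (econst U c))"

definition Lzero :: "('n::finite) elt \<times> 'n elt" where "Lzero = (ezero, ezero)"

definition DL :: "((complex, ('n::{finite,linorder})) vec) set \<Rightarrow> 'n elt \<times> 'n elt \<Rightarrow> 'n elt \<times> 'n elt" where
  "DL U w = (dx U (snd w), ezero)"

definition bracketL :: "((complex, ('n::{finite,linorder})) vec) set \<Rightarrow> 'n elt \<times> 'n elt \<Rightarrow> 'n elt \<times> 'n elt \<Rightarrow> 'n elt \<times> 'n elt" where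
  "bracketL U w1 w2 = (bracket U (fst w1) (fst w2),
      eadd (bracket U (snd w1) (fst w2)) (bracket U (sigma (fst w1)) (snd w2)))"

end

theory Submission
  imports Defs
begin

lemma linear_axis: "linear (axis a :: complex \<Rightarrow> (complex,'n::finite) vec)"
  by (rule linearI) (auto simp: axis_def vec_eq_iff)

lemma partial_eq:
  fixes f :: "(complex,'n::finite) vec \<Rightarrow> complex"
  assumes L: "linear L" "\<forall>c v. L (c *s v) = c * L v" and d: "(f has_derivative L) (at x)"
  shows "deriv (\<lambda>z. f (\<chi> b. if b = a then z else x $ b)) (x $ a) = L (axis a 1)"
proof -
  define l where "l = (\<lambda>z::complex. (x - axis a (x$a)) + axis a z)"
  have eq: "(\<lambda>z. f (\<chi> b. if b = a then z else x $ b)) = f \<circ> l"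
    unfolding l_def o_def by (rule ext, rule arg_cong[where f=f]) (auto simp: axis_def vec_eq_iff)
  have bl: "bounded_linear (axis a :: complex \<Rightarrow> (complex,'n) vec)"
    using linear_axis linear_conv_bounded_linear by blast
  have dl: "(l has_derivative axis a) (at (x$a))"
    unfolding l_def
    by (rule has_derivative_eq_rhs, rule has_derivative_add[OF has_derivative_const bounded_linear_imp_has_derivative[OF bl]]) auto
  have lx: "l (x$a) = x" by (auto simp: l_def axis_def vec_eq_iff)
  have d': "(f has_derivative L) (at (l (x$a)))" unfolding lx by (rule d)
  have D: "((f \<circ> l) has_derivative (L \<circ> axis a)) (at (x$a))"
    by (rule diff_chain_at[OF dl d'])
  have E: "L \<circ> axis a = (\<lambda>h. h * L (axis a 1))"
  proof
    fix h :: complex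
    have "axis a h = h *s axis a (1::complex)" by (auto simp: axis_def vec_eq_iff)
    then show "(L \<circ> axis a) h = h * L (axis a 1)" using L(2) by simp
  qed
  have "((f \<circ> l) has_field_derivative L (axis a 1)) (at (x$a))"
  proof -
    have "(*) (L (axis a 1)) = (\<lambda>h. h * L (axis a 1))" by (auto simp: mult.commute)
    then show ?thesis using D E by (simp add: has_field_derivative_def)
  qed
  then show ?thesis unfolding eq by (rule DERIV_imp_deriv)
qed

lemma const_from_pd:
  fixes U :: "((complex, 'n::finite) vec) set" and f
  assumes U: "open U" "connected U" and h: "holo U f"
    and pd0: "\<forall>a. \<forall>x\<in>U. pd U a f x = 0"
  shows "\<exists>c. \<forall>x\<in>U. f x = c"
proof -
  have d0: "(f has_derivative (\<lambda>h. 0)) (at x)" if "x \<in> U" for x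
  proof -
    have "\<exists>L. linear L \<and> (\<forall>c v. L (c *s v) = c * L v) \<and> (f has_derivative L) (at x)"
      using h that unfolding holo_def by (rule bspec)
    then obtain L where L: "linear L" "\<forall>c v. L (c *s v) = c * L v" "(f has_derivative L) (at x)"
      by (elim exE conjE)
    have ax: "L (axis a 1) = 0" for a
      using partial_eq[OF L, of a] pd0 that by (simp add: pd_def)
    have "L v = 0" for v
    proof -
      have "L v = L (\<Sum>i\<in>UNIV. (v$i) *s axis i 1)" by (simp add: basis_expansion)
      also have "\<dots> = (\<Sum>i\<in>UNIV. L ((v$i) *s axis i 1))" by (rule linear_sum[OF L(1)])
      also have "\<dots> = 0" using L(2) ax by simp
      finally show ?thesis .
    qed
    then have "L = (\<lambda>h. 0)" by auto
    then show ?thesis using L(3) by simp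
  qed
  have cont: "continuous_on U f"
    by (rule continuous_at_imp_continuous_on, rule ballI, rule has_derivative_continuous[OF d0])
  have d0w: "\<forall>x\<in>U - {}. (f has_derivative (\<lambda>h. 0)) (at x within U)"
    by (auto intro!: has_derivative_at_withinI d0)
  have "f constant_on U"
    by (rule has_derivative_zero_connected_constant_on[OF U(2) U(1) finite.emptyI cont d0w])
  then show ?thesis unfolding constant_on_def by auto
qed


lemma sum_single:
  assumes "finite A" "zz \<in> A" "\<forall>v\<in>A. v \<noteq> zz \<longrightarrow> g v = 0"
  shows "sum g A = g zz"
proof -
  have "sum g A = g zz + sum g (A - {zz})" using assms(1,2) by (simp add: sum.remove)
  also have "sum g (A - {zz}) = 0" using assms(3) by (intro sum.neutral) auto
  finally show ?thesis by simp
qed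

lemma Lam_out: "m \<notin> supp u \<Longrightarrow> u m = (\<lambda>_. 0)"
  by (simp add: supp_def)

lemma pd_zero: "pd U a (\<lambda>_. 0) = (\<lambda>_. 0)"
  by (simp add: pd_def fun_eq_iff)

lemma line_eq: "(\<chi> b. if b = a then z else x $ b) = (x - axis a (x$a)) + axis a (z::complex)"
  by (auto simp: axis_def vec_eq_iff)

lemma pd_econst:
  fixes U :: "((complex, 'n::finite) vec) set"
  assumes "open U"
  shows "pd U a (\<lambda>x. if x \<in> U then c else 0) x = 0"
proof (cases "x \<in> U")
  case True
  define l where "l = (\<lambda>z::complex. (x - axis a (x$a)) + axis a z)"
  have bl: "bounded_linear (axis a :: complex \<Rightarrow> (complex,'n) vec)"
    using linear_axis linear_conv_bounded_linear by blast
  have cl: "isCont l z" for z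
    unfolding l_def by (intro continuous_intros bounded_linear.continuous[OF bl])
  have op: "open (l -` U)" by (rule continuous_open_vimage[OF assms cl]) 
  have lx: "l (x$a) \<in> U" using True by (simp add: l_def axis_def vec_eq_iff) 
  have "((\<lambda>z. if (\<chi> b. if b = a then z else x $ b) \<in> U then c else 0) has_field_derivative 0) (at (x$a))"
    by (rule has_field_derivative_transform_within_open[OF DERIV_const op])
       (use lx in \<open>auto simp: line_eq l_def\<close>)
  then show ?thesis using True by (simp add: pd_def DERIV_imp_deriv)
qed (simp add: pd_def)

lemma Lam_ezero: "Lam U ezero"
proof -
  have "holo U (\<lambda>_. 0)" unfolding holo_def
    by (auto intro!: exI[where x="\<lambda>_. 0"] linearI)
  then show ?thesis by (simp add: Lam_def ezero_def supp_def)
qed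

lemma dEven_ezero: "dEven U k a ezero m = (\<lambda>_. 0)"
  by (cases m) (simp add: dEven_def ezero_def pd_zero)

lemma dOdd_ezero: "dOdd k a ezero m = (\<lambda>_. 0)"
  by (cases m) (simp add: dOdd_def ezero_def)

lemma dx_ezero: "dx U ezero = ezero"
  by (auto simp: dx_def dEven_ezero dOdd_ezero) (auto simp: ezero_def)

lemma dx_econst:
  fixes U :: "((complex, 'n::{finite,linorder}) vec) set"
  assumes "open U"
  shows "dx U (econst U c) = ezero"
proof (intro ext)
  fix m :: "'n mono" and x
  obtain E S where m: "m = (E,S)" by (cases m)
  have s1: "(\<Sum>v\<in>{v. (Suc (fst v), snd v) \<in># E}.
          dEven U (fst v) (snd v) (econst U c) (E - {#(Suc (fst v), snd v)#}, S) x) = 0"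
  proof (rule sum.neutral, clarify)
    fix k b assume "(Suc (fst (k,b)), snd (k,b)) \<in># E"
    show "dEven U (fst (k,b)) (snd (k,b)) (econst U c) (E - {#(Suc (fst (k,b)), snd (k,b))#}, S) x = 0"
    proof (cases "k = 0")
      case True
      show ?thesis
      proof (cases "(E - {#(Suc 0, b)#}, S) = ({#}, {})")
        case True2: True
        then show ?thesis using True pd_econst[OF assms, of b c x]
          by (simp add: dEven_def econst_def)
      next
        case False
        then have "econst U c (E - {#(Suc 0, b)#}, S) = (\<lambda>_. 0)" by (auto simp: econst_def)
        then show ?thesis using True by (simp add: dEven_def pd_zero)
      qed
    qed (simp add: dEven_def econst_def)
  qed
  have s2: "(\<Sum>v\<in>{v. (Suc (fst v), snd v) \<in> S}.
          osign S (Suc (fst v), snd v) * dOdd (fst v) (snd v) (econst U c) (E, S - {(Suc (fst v), snd v)}) x) = 0"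
  proof (rule sum.neutral, rule ballI)
    fix v :: "'n var"
    have "econst U c (E, insert (fst v, snd v) (S - {(Suc (fst v), snd v)})) = (\<lambda>_. 0)"
      by (simp add: econst_def fun_eq_iff)
    then show "osign S (Suc (fst v), snd v) * dOdd (fst v) (snd v) (econst U c) (E, S - {(Suc (fst v), snd v)}) x = 0"
      by (simp add: dOdd_def)
  qed
  show "dx U (econst U c) m x = ezero m x"
    unfolding m dx_def ezero_def by (simp only: prod.case s1 s2) simp
qed


lemma fin_pre: "finite {v. (Suc (fst v), snd v) \<in> A} " if "finite A" for A :: "('n var) set"
proof -
  have "{v. (Suc (fst v), snd v) \<in> A} = (\<lambda>v. (Suc (fst v), snd v)) -` A" by auto
  moreover have "inj (\<lambda>v::'n var. (Suc (fst v), snd v))" by (auto simp: inj_def)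
  ultimately show ?thesis using finite_vimageI[OF that] by simp
qed

lemma osign_nz: "osign S j \<noteq> 0"
  by (simp add: osign_def)

lemma ker_const:
  fixes U :: "((complex, 'n::{finite,linorder}) vec) set"
  assumes U: "open U" "connected U" and L: "Lam U u" and D: "dx U u = ezero"
  shows "\<exists>c. u = econst U c"
proof -
  have finsupp: "finite (supp u)" using L by (simp add: Lam_def)
  have suppP: "\<And>m. m \<in> supp u \<Longrightarrow> (\<forall>v \<in># fst m. fst v \<ge> 1) \<and> finite (snd m)"
    using L by (simp add: Lam_def)
  have Dz: "dx U u m x = 0" for m x using D by (simp add: ezero_def)
  define V where "V = (\<Union>m\<in>supp u. set_mset (fst m) \<union> snd m)"
  have finV: "finite V" unfolding V_def using finsupp suppP by auto
  have Vempty: "V = {}"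
  proof (rule ccontr)
    assume "V \<noteq> {}"
    define N where "N = Max (fst ` V)"
    have Nmax: "\<forall>v\<in>V. fst v \<le> N" using finV by (simp add: N_def)
    have "N \<in> fst ` V" unfolding N_def using finV \<open>V \<noteq> {}\<close> by (intro Max_in) auto
    then obtain a m0 where m0: "m0 \<in> supp u" "(N,a) \<in> set_mset (fst m0) \<union> snd m0"
      unfolding V_def by force
    have high: "u m = (\<lambda>_. 0)" if "(Suc N, a) \<in># fst m \<or> (Suc N, a) \<in> snd m" for m
    proof (rule ccontr)
      assume "u m \<noteq> (\<lambda>_. 0)"
      then have "m \<in> supp u" by (simp add: supp_def)
      then have "(Suc N, a) \<in> V" using that unfolding V_def by auto
      then show False using Nmax by fastforce
    qed
    obtain E0 S0 where m0E: "m0 = (E0, S0)" by (cases m0)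
    obtain x0 where x0: "u (E0,S0) x0 \<noteq> 0" using m0(1) m0E by (auto simp: supp_def)
    have finS0: "finite S0" using suppP[OF m0(1)] m0E by simp
    have nE: "(Suc N, a) \<notin># E0" and nS: "(Suc N, a) \<notin> S0"
      using high[of "(E0,S0)"] x0 by auto
    show False
    proof (cases "(N,a) \<in># E0")
      case True
      have N1: "N \<noteq> 0" using suppP[OF m0(1)] m0E True by fastforce
      define EM where "EM = add_mset (Suc N, a) (E0 - {#(N,a)#})"
      define A where "A = {v. (Suc (fst v), snd v) \<in># EM}"
      have finA: "finite A" unfolding A_def by (rule fin_pre) simp
      have s1: "(\<Sum>v\<in>A. dEven U (fst v) (snd v) u (EM - {#(Suc (fst v), snd v)#}, S0) x0)
           = dEven U N a u (EM - {#(Suc N, a)#}, S0) x0"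
      proof -
        have inA: "(N,a) \<in> A" by (simp add: A_def EM_def)
        have oth0: "dEven U k b u (EM - {#(Suc k, b)#}, S0) x0 = 0" if ne: "(k,b) \<noteq> (N,a)" for k b
        proof -
          have ne2: "(Suc k, b) \<noteq> (Suc N, a)" using ne by simp
          have inE: "(Suc N, a) \<in># EM - {#(Suc k, b)#}"
            unfolding EM_def diff_union_swap[OF ne2, symmetric] by simp
          show ?thesis
          proof (cases "k = 0")
            case True
            have "u (EM - {#(Suc k, b)#}, S0) = (\<lambda>_. 0)" using high inE by simp
            then show ?thesis using True by (simp add: dEven_def pd_zero)
          next
            case False
            have "u (add_mset (k,b) (EM - {#(Suc k, b)#}), S0) = (\<lambda>_. 0)" using high inE by simp
            then show ?thesis using False by (simp add: dEven_def)
          qed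
        qed
        have oth: "\<forall>v\<in>A. v \<noteq> (N, a) \<longrightarrow> dEven U (fst v) (snd v) u (EM - {#(Suc (fst v), snd v)#}, S0) x0 = 0"
        proof (intro ballI impI)
          fix v assume "v \<noteq> (N,a)"
          then show "dEven U (fst v) (snd v) u (EM - {#(Suc (fst v), snd v)#}, S0) x0 = 0"
            using oth0[of "fst v" "snd v"] by simp
        qed
        show ?thesis using sum_single[of A "(N,a)" "\<lambda>v. dEven U (fst v) (snd v) u (EM - {#(Suc (fst v), snd v)#}, S0) x0", OF finA inA oth] by simp
      qed
      have s1': "dEven U N a u (EM - {#(Suc N, a)#}, S0) x0 = of_nat (count E0 (N,a)) * u (E0,S0) x0"
      proof -
        have c: "count (E0 - {#(N,a)#}) (N,a) + 1 = count E0 (N,a)" using True by simp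
        have i: "add_mset (N,a) (E0 - {#(N,a)#}) = E0" using True by simp
        have em: "EM - {#(Suc N, a)#} = E0 - {#(N,a)#}" by (simp add: EM_def)
        have "dEven U N a u (E0 - {#(N,a)#}, S0) x0 = of_nat (count (E0 - {#(N,a)#}) (N,a) + 1) * u (add_mset (N,a) (E0 - {#(N,a)#}), S0) x0"
          using N1 by (simp add: dEven_def)
        also have "\<dots> = of_nat (count E0 (N,a)) * u (E0,S0) x0" by (simp only: c i)
        finally show ?thesis by (simp only: em)
      qed
      have s2: "(\<Sum>v\<in>{v. (Suc (fst v), snd v) \<in> S0}.
          osign S0 (Suc (fst v), snd v) * dOdd (fst v) (snd v) u (EM, S0 - {(Suc (fst v), snd v)}) x0) = 0"
      proof (rule sum.neutral, clarify)
        fix k b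
        have "u (EM, insert (k,b) (S0 - {(Suc k, b)})) = (\<lambda>_. 0)" by (rule high) (simp add: EM_def)
        then show "osign S0 (Suc (fst (k,b)), snd (k,b)) * dOdd (fst (k,b)) (snd (k,b)) u (EM, S0 - {(Suc (fst (k,b)), snd (k,b))}) x0 = 0"
          by (simp add: dOdd_def)
      qed
      have "dx U u (EM, S0) x0 = of_nat (count E0 (N,a)) * u (E0,S0) x0"
        unfolding dx_def by (simp only: prod.case A_def[symmetric] s1 s1' s2) simp
      moreover have "count E0 (N,a) \<noteq> 0" using True by simp
      ultimately show False using Dz x0 by simp
    next
      case False
      then have NS: "(N,a) \<in> S0" using m0 m0E by simp
      define SM where "SM = insert (Suc N, a) (S0 - {(N,a)})"
      define B where "B = {v. (Suc (fst v), snd v) \<in> SM}"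
      have finB: "finite B" unfolding B_def by (rule fin_pre) (simp add: SM_def finS0)
      have s2: "(\<Sum>v\<in>B. osign SM (Suc (fst v), snd v) * dOdd (fst v) (snd v) u (E0, SM - {(Suc (fst v), snd v)}) x0)
           = osign SM (Suc N, a) * dOdd N a u (E0, SM - {(Suc N, a)}) x0"
      proof -
        have inB: "(N,a) \<in> B" by (simp add: B_def SM_def)
        have oth0: "osign SM (Suc k, b) * dOdd k b u (E0, SM - {(Suc k, b)}) x0 = 0" if ne: "(k,b) \<noteq> (N,a)" for k b
        proof -
          have "u (E0, insert (k,b) (SM - {(Suc k, b)})) = (\<lambda>_. 0)"
            by (rule high) (use ne in \<open>auto simp: SM_def\<close>)
          then show ?thesis
            by (simp add: dOdd_def)
        qed
        have oth: "\<forall>v\<in>B. v \<noteq> (N, a) \<longrightarrow> osign SM (Suc (fst v), snd v) * dOdd (fst v) (snd v) u (E0, SM - {(Suc (fst v), snd v)}) x0 = 0"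
        proof (intro ballI impI)
          fix v assume "v \<noteq> (N,a)"
          then show "osign SM (Suc (fst v), snd v) * dOdd (fst v) (snd v) u (E0, SM - {(Suc (fst v), snd v)}) x0 = 0"
            using oth0[of "fst v" "snd v"] by simp
        qed
        show ?thesis using sum_single[of B "(N,a)" "\<lambda>v. osign SM (Suc (fst v), snd v) * dOdd (fst v) (snd v) u (E0, SM - {(Suc (fst v), snd v)}) x0", OF finB inB oth] by simp
      qed
      have s2': "dOdd N a u (E0, SM - {(Suc N, a)}) x0 = osign (S0 - {(N,a)}) (N,a) * u (E0,S0) x0"
      proof -
        have e: "SM - {(Suc N, a)} = S0 - {(N,a)}" using nS by (auto simp: SM_def)
        have i: "insert (N,a) (S0 - {(N,a)}) = S0" using NS by auto
        show ?thesis by (simp add: dOdd_def e insert_absorb[OF NS])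
      qed
      have s1: "(\<Sum>v\<in>{v. (Suc (fst v), snd v) \<in># E0}.
          dEven U (fst v) (snd v) u (E0 - {#(Suc (fst v), snd v)#}, SM) x0) = 0"
      proof (rule sum.neutral, clarify)
        fix k b
        have h1: "u (E0 - {#(Suc k, b)#}, SM) = (\<lambda>_. 0)" by (rule high) (simp add: SM_def)
        have h2: "u (add_mset (k,b) (E0 - {#(Suc k, b)#}), SM) = (\<lambda>_. 0)" by (rule high) (simp add: SM_def)
        show "dEven U (fst (k,b)) (snd (k,b)) u (E0 - {#(Suc (fst (k,b)), snd (k,b))#}, SM) x0 = 0"
          using h1 h2 by (cases "k = 0") (auto simp: dEven_def pd_zero)
      qed
      have "dx U u (E0, SM) x0 = osign SM (Suc N, a) * (osign (S0 - {(N,a)}) (N,a) * u (E0,S0) x0)"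
        unfolding dx_def by (simp only: prod.case B_def[symmetric] s1 s2 s2') simp
      then show False using Dz[of "(E0,SM)" x0] x0 osign_nz[of SM "(Suc N,a)"] osign_nz[of "S0 - {(N,a)}" "(N,a)"] by simp
    qed
  qed
  have only: "m \<in> supp u \<Longrightarrow> m = ({#},{})" for m
    using Vempty unfolding V_def by (cases m) auto
  define f where "f = u ({#},{})"
  have hf: "holo U f" using L by (simp add: Lam_def f_def)
  have pd0: "\<forall>a. \<forall>x\<in>U. pd U a f x = 0"
  proof (intro allI ballI)
    fix a :: 'n and x assume "x \<in> U"
    have e: "{v. (Suc (fst v), snd v) \<in># {#(Suc 0, a)#}} = {(0,a)}" by auto
    have e2: "{v. fst v = 0 \<and> snd v = a} = {(0::nat,a)}" by auto
    have "dx U u ({#(Suc 0, a)#}, {}) x = pd U a f x"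
      by (simp add: dx_def e e2 dEven_def f_def)
    then show "pd U a f x = 0" using Dz by simp
  qed
  obtain c where c: "\<forall>x\<in>U. f x = c" using const_from_pd[OF U hf pd0] by blast
  have "u = econst U c"
  proof (intro ext)
    fix m x
    show "u m x = econst U c m x"
    proof (cases "m = ({#},{})")
      case True
      have out: "\<And>m x. x \<notin> U \<Longrightarrow> u m x = 0" using L unfolding Lam_def by blast
      show ?thesis
      proof (cases "x \<in> U")
        case True2: True
        have "f x = c" using c True2 by blast
        then show ?thesis using True True2 by (simp add: econst_def f_def)
      next
        case False2: False
        have "u m x = 0" using out False2 by blast
        then show ?thesis using False2 by (simp add: econst_def)
      qed
    next
      case False
      then have "m \<notin> supp u" using only by blast
      then show ?thesis using False by (simp add: supp_def econst_def)
    qed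
  qed
  then show ?thesis by blast
qed


theorem theorem5p1:
  fixes U :: "((complex, 'n::{finite,linorder}) vec) set"
  assumes "open U" and "connected U"
  shows
   "(\<forall>u. Lam U u \<longrightarrow> (dx U u = ezero \<longleftrightarrow> (\<exists>c. u = econst U c)))
  \<and> (\<forall>w. LL U w \<longrightarrow> (\<exists>v. Lam U v \<and> fst (DL U w) = dx U v))
  \<and> (\<forall>w1 w2. LL U w1 \<and> LL U w2 \<longrightarrow>
        (\<exists>v. Lam U v \<and> fst (bracketL U w1 w2) = eadd (bracket U (fst w1) (fst w2)) (dx U v)))
  \<and> (\<forall>u. Lam U u \<longrightarrow> (\<exists>w. LL U w \<and> Leq U (DL U w) Lzero \<and> fst w = u))
  \<and> (\<forall>w. LL U w \<and> Leq U (DL U w) Lzero \<and> (\<exists>v. Lam U v \<and> fst w = dx U v)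
        \<longrightarrow> (\<exists>w'. LL U w' \<and> Leq U w (DL U w')))"
proof (intro conjI allI impI)
  have P1: "dx U u = ezero \<longleftrightarrow> (\<exists>c. u = econst U c)" if "Lam U u" for u
  proof
    assume "dx U u = ezero"
    then show "\<exists>c. u = econst U c" using ker_const[OF assms that] by blast
  next
    assume "\<exists>c. u = econst U c"
    then show "dx U u = ezero" using dx_econst[OF assms(1)] by blast
  qed
  fix u assume "Lam U u"
  then show "dx U u = ezero \<longleftrightarrow> (\<exists>c. u = econst U c)" by (rule P1)
next
  fix w assume "LL U w"
  then show "\<exists>v. Lam U v \<and> fst (DL U w) = dx U v" by (auto simp: LL_def DL_def)
next
  fix w1 w2 assume "LL U w1 \<and> LL U w2"
  have "fst (bracketL U w1 w2) = eadd (bracket U (fst w1) (fst w2)) (dx U ezero)"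
    by (simp add: bracketL_def dx_ezero) (simp add: eadd_def ezero_def)
  then show "\<exists>v. Lam U v \<and> fst (bracketL U w1 w2) = eadd (bracket U (fst w1) (fst w2)) (dx U v)"
    using Lam_ezero by blast
next
  fix u assume "Lam U u"
  have "Leq U (DL U (u, ezero)) Lzero"
    unfolding Leq_def DL_def Lzero_def
    by (simp add: dx_ezero, rule exI[where x=0]) (simp add: econst_def ezero_def eadd_def fun_eq_iff)
  then show "\<exists>w. LL U w \<and> Leq U (DL U w) Lzero \<and> fst w = u"
    using \<open>Lam U u\<close> Lam_ezero by (auto simp: LL_def intro!: exI[where x="(u, ezero)"])
next
  fix w assume H: "LL U w \<and> Leq U (DL U w) Lzero \<and> (\<exists>v. Lam U v \<and> fst w = dx U v)"
  obtain v where v: "Lam U v" "fst w = dx U v" using H by blast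
  have Ls: "Lam U (snd w)" using H by (simp add: LL_def)
  have "dx U (snd w) = ezero" using H by (simp add: Leq_def DL_def Lzero_def)
  then obtain c where c: "snd w = econst U c" using ker_const[OF assms Ls] by blast
  have "LL U (ezero, v)" using v Lam_ezero by (simp add: LL_def)
  moreover have "Leq U w (DL U (ezero, v))"
    unfolding Leq_def DL_def using v c by (auto simp: eadd_def ezero_def)
  ultimately show "\<exists>w'. LL U w' \<and> Leq U w (DL U w')" by blast
qed

end
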